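(* Let $n\geqslant2$, $0<\varepsilon<1$, $i_0,j_0\in\{0,\dots,n\}$, $x_{i_0}\geqslant1$ and $y_{j_0}$ integers, $\boldsymbol{c}\in\mathbf{Z}^{n+1}$, $q\geqslant1$. For $\boldsymbol{x}=(x_i)\in\mathbf{Z}^{n+1}$ (with the given $x_{i_0}$) and $(a'_j)_{j\neq j_0}\in(\mathbf{Z}/q\mathbf{Z})^n$, let $\boldsymbol{a}'\in(\mathbf{Z}/q\mathbf{Z})^{n+1}$ have coordinates $a'_j$ ($j\neq j_0$) and $y_{j_0}\bmod q$ at $j_0$. Then for every $\eta>0$, \[\sum_{(x_i)_{i\neq i_0}\in\mathbf{Z}^n}\ \sum_{(a'_j)_{j\neq j_0}\in(\mathbf{Z}/q\mathbf{Z})^n}\underline{w}_\varepsilon(\boldsymbol{x})\,|S_q(\boldsymbol{x},\boldsymbol{a}')(\boldsymbol{c})|\ll q^{n+3+\eta}x_{i_0}^n,\] the implied constant depending only on $n,\varepsilon,\eta$.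
   Context: $e_q(x)=\exp(2i\pi x/q)$; $S_q(\boldsymbol{x},\boldsymbol{a}')(\boldsymbol{c})=\sum_{d\in(\mathbf{Z}/q\mathbf{Z})^*}\sum_{\boldsymbol{b}\in(\mathbf{Z}/q\mathbf{Z})^{n+1}}e_q\big(d\sum_kx_ka'_kb_k+\boldsymbol{c}.\boldsymbol{b}\big)$. $\omega_0(x)=\exp(-(1-x^2)^{-1})$ for $|x|<1$, $0$ otherwise; $c_0=\int\omega_0$; $\underline{\omega}_\varepsilon(x)=c_0^{-1}\int_{-\infty}^{x/\varepsilon-1}\omega_0(y)dy$; $\underline{w}_\varepsilon(\boldsymbol{x})=\prod_{i\neq i_0}\underline{\omega}_\varepsilon(1-\frac{|x_i|}{x_{i_0}})\underline{\omega}_\varepsilon(\frac{|x_i|}{x_{i_0}}-\frac1{x_{i_0}})$. *)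

theory Defs
  imports "HOL-Analysis.Analysis"
begin

definition eq :: "int \<Rightarrow> int \<Rightarrow> complex" where
  "eq q x = exp (2 * pi * \<i> * of_int x / of_int q)"

text \<open>Residues mod q represented by 0..q-1; units are those coprime to q.
  Vectors in Z^(n+1) / (Z/qZ)^(n+1) are functions on the index set {0..n}.\<close>
definition Sq :: "nat \<Rightarrow> int \<Rightarrow> (nat \<Rightarrow> int) \<Rightarrow> (nat \<Rightarrow> int) \<Rightarrow> (nat \<Rightarrow> int) \<Rightarrow> complex" where
  "Sq n q x a' c =
     (\<Sum>d\<in>{d\<in>{0..<q}. coprime d q}.
        \<Sum>b\<in>PiE {0..n} (\<lambda>_. {0..<q}).
          eq q (d * (\<Sum>k\<le>n. x k * a' k * b k) + (\<Sum>k\<le>n. c k * b k)))"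

definition omega0 :: "real \<Rightarrow> real" where
  "omega0 x = (if \<bar>x\<bar> < 1 then exp (- inverse (1 - x\<^sup>2)) else 0)"

definition c0 :: real where
  "c0 = integral UNIV omega0"

definition omega_low :: "real \<Rightarrow> real \<Rightarrow> real" where
  "omega_low \<epsilon> x = inverse c0 * integral {..x / \<epsilon> - 1} omega0"

definition w_low :: "nat \<Rightarrow> nat \<Rightarrow> real \<Rightarrow> (nat \<Rightarrow> int) \<Rightarrow> real" where
  "w_low n i0 \<epsilon> x =
     (\<Prod>i\<in>{0..n} - {i0}.
        omega_low \<epsilon> (1 - \<bar>real_of_int (x i)\<bar> / real_of_int (x i0))
      * omega_low \<epsilon> (\<bar>real_of_int (x i)\<bar> / real_of_int (x i0) - 1 / real_of_int (x i0)))"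

end

theory Submission
  imports Defs "HOL-Computational_Algebra.Primes"
begin


definition tau :: "nat \<Rightarrow> nat" where "tau q = card {d. d dvd q}"

lemma tau_step:
  assumes p: "prime p" and q: "q > 0"
  shows "tau q \<le> (multiplicity p q + 1) * tau (q div p ^ multiplicity p q)"
proof -
  define a where "a = multiplicity p q"
  define m where "m = q div p ^ a"
  have qm: "q = p ^ a * m" unfolding m_def a_def using multiplicity_dvd[of p q] by simp
  have ndm: "\<not> p dvd m" unfolding m_def a_def using q p by (intro multiplicity_decompose) (auto simp: prime_elem_not_unit)
  have m0: "m > 0" using q qm by (auto intro: gr0I)
  define f where "f = (\<lambda>d::nat. (multiplicity p d, d div p ^ multiplicity p d))"
  have inj: "inj_on f {d. d dvd q}"
  proof (rule inj_onI)
    fix x y assume "x \<in> {d. d dvd q}" "y \<in> {d. d dvd q}" "f x = f y"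
    then have "multiplicity p x = multiplicity p y" "x div p ^ multiplicity p x = y div p ^ multiplicity p y"
      by (auto simp: f_def)
    then show "x = y" using multiplicity_dvd[of p x] multiplicity_dvd[of p y]
      by (metis dvd_div_mult_self)
  qed
  have img: "f ` {d. d dvd q} \<subseteq> {0..a} \<times> {d. d dvd m}"
  proof
    fix z assume "z \<in> f ` {d. d dvd q}"
    then obtain d where d: "d dvd q" and z: "z = f d" by auto
    have d0: "d \<noteq> 0" using d q by auto
    have "p ^ multiplicity p d dvd q" using multiplicity_dvd[of p d] d dvd_trans by blast
    then have k: "multiplicity p d \<le> a" unfolding a_def
      using q p by (metis power_dvd_iff_le_multiplicity not_prime_unit neq0_conv)
    define e where "e = d div p ^ multiplicity p d"
    have nde: "\<not> p dvd e" unfolding e_def using d0 p by (intro multiplicity_decompose) (auto simp: prime_elem_not_unit)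
    have ed: "d = e * p ^ multiplicity p d" unfolding e_def using multiplicity_dvd[of p d] by simp
    have "e dvd e * p ^ multiplicity p d" by (rule dvd_triv_left)
    then have "e dvd d" using ed by simp
    then have "e dvd q" using d by (rule dvd_trans)
    then have "e dvd p ^ a * m" using qm by simp
    moreover have "coprime e (p ^ a)" using nde p
    proof -
      have "coprime p e" using p nde by (rule prime_imp_coprime)
      then have "coprime (p ^ a) e" by simp
      then show ?thesis by (simp only: coprime_commute)
    qed
    ultimately have "e dvd m" using coprime_dvd_mult_right_iff by blast
    then show "z \<in> {0..a} \<times> {d. d dvd m}" using k z unfolding f_def e_def by auto
  qed
  have fin: "finite ({0..a} \<times> {d. d dvd m})" using m0 by (simp add: finite_divisors_nat)
  have "tau q = card (f ` {d. d dvd q})" unfolding tau_def using inj by (simp add: card_image)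
  also have "\<dots> \<le> card ({0..a} \<times> {d. d dvd m})" using card_mono[OF fin img] .
  also have "\<dots> = (a + 1) * tau m" unfolding tau_def by (simp add: card_cartesian_product)
  finally show ?thesis unfolding a_def m_def .
qed

lemma const_K:
  assumes "\<delta> > 0"
  shows "\<exists>K\<ge>1. \<forall>a::nat. real a + 1 \<le> K * (2 powr \<delta>) ^ a"
proof -
  define r where "r = 2 powr \<delta>"
  have r1: "r > 1" unfolding r_def using assms by simp
  define K where "K = max 1 (1 / (r - 1))"
  have "real a + 1 \<le> K * r ^ a" for a
  proof -
    have "1 + real a * (r - 1) \<le> (1 + (r - 1)) ^ a" using r1 by (intro Bernoulli_inequality) simp
    then have b: "1 + real a * (r - 1) \<le> r ^ a" by simp
    have "K * (r - 1) \<ge> (1 / (r - 1)) * (r - 1)" unfolding K_def using r1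
      by (intro mult_right_mono) auto
    then have "K * (r - 1) \<ge> 1" using r1 by simp
    have "real a + 1 \<le> K * (1 + real a * (r - 1))"
    proof -
      have "real a * 1 \<le> real a * (K * (r - 1))" using \<open>K * (r - 1) \<ge> 1\<close> by (intro mult_left_mono) auto
      moreover have "1 \<le> K" unfolding K_def by simp
      ultimately show ?thesis by (simp add: algebra_simps)
    qed
    also have "\<dots> \<le> K * r ^ a" using b unfolding K_def by (intro mult_left_mono) auto
    finally show ?thesis .
  qed
  then show ?thesis unfolding r_def K_def by (intro exI[of _ "max 1 (1 / (r - 1))"]) (auto simp: r_def)
qed

definition smallp :: "real \<Rightarrow> nat \<Rightarrow> nat set" where
  "smallp \<delta> q = {r. prime r \<and> r dvd q \<and> real r powr \<delta> < 2}"

lemma tau_bound_aux: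
  assumes "\<delta> > 0" and K1: "K \<ge> 1" and K: "\<forall>a::nat. real a + 1 \<le> K * (2 powr \<delta>) ^ a"
  shows "q > 0 \<Longrightarrow> real (tau q) \<le> K ^ card (smallp \<delta> q) * real q powr \<delta>"
proof (induction q rule: less_induct)
  case (less q)
  show ?case
  proof (cases "q = 1")
    case True
    then show ?thesis using K1 by (simp add: tau_def one_le_power)
  next
    case False
    then obtain p where p: "prime p" "p dvd q" using less.prems prime_factor_nat by blast
    define a where "a = multiplicity p q"
    define m where "m = q div p ^ a"
    have qm: "q = p ^ a * m" unfolding m_def a_def using multiplicity_dvd[of p q] by simp
    have ndm: "\<not> p dvd m" unfolding m_def a_def using less.prems p
      by (intro multiplicity_decompose) (auto simp: prime_elem_not_unit)
    have a1: "a \<ge> 1" unfolding a_def using p less.prems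
      by (metis One_nat_def not_prime_unit neq0_conv power_dvd_iff_le_multiplicity power_one_right)
    have m0: "m > 0" using less.prems qm by (auto intro: gr0I)
    have p2: "p \<ge> 2" using p prime_ge_2_nat by blast
    have "p ^ 1 \<le> p ^ a" using a1 p2 by (intro power_increasing) auto
    then have pa2: "2 \<le> p ^ a" using p2 by simp
    have "2 * m \<le> p ^ a * m" using pa2 by (intro mult_right_mono) auto
    then have mq: "m < q" using qm m0 by linarith
    have IH: "real (tau m) \<le> K ^ card (smallp \<delta> m) * real m powr \<delta>" using less.IH[OF mq m0] .
    have st: "tau q \<le> (a + 1) * tau m" using tau_step[OF p(1) less.prems] unfolding a_def m_def .
    have sm_fin: "finite (smallp \<delta> m)" unfolding smallp_def
      by (rule finite_subset[of _ "{..m}"]) (use m0 in \<open>auto intro: dvd_imp_le\<close>)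
    have pnot: "p \<notin> smallp \<delta> m" using ndm unfolding smallp_def by auto
    have sq: "smallp \<delta> q = smallp \<delta> m \<union> (if real p powr \<delta> < 2 then {p} else {})"
    proof -
      have "r dvd q \<longleftrightarrow> r = p \<or> r dvd m" if "prime r" for r
      proof
        assume "r dvd q"
        then have "r dvd p ^ a \<or> r dvd m" using qm that by (simp add: prime_dvd_mult_iff)
        then show "r = p \<or> r dvd m" using that p by (metis prime_dvd_power primes_dvd_imp_eq)
      next
        assume "r = p \<or> r dvd m" then show "r dvd q" using p qm by auto
      qed
      then show ?thesis unfolding smallp_def using p by auto
    qed
    have pp: "(real p ^ a) powr \<delta> = (real p powr \<delta>) ^ a"
    proof -
      have "real p ^ a = real p powr real a" using p2 by (simp add: powr_realpow)
      then have "(real p ^ a) powr \<delta> = real p powr (real a * \<delta>)" by (simp add: powr_powr)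
      also have "\<dots> = (real p powr \<delta>) ^ a" using p2 by (simp add: powr_power)
      finally show ?thesis .
    qed
    have pq: "real q powr \<delta> = (real p powr \<delta>) ^ a * real m powr \<delta>"
      using qm pp by (simp add: powr_mult)
    have pd0: "real p powr \<delta> > 0" using p2 by simp
    show ?thesis
    proof (cases "real p powr \<delta> < 2")
      case True
      have c: "card (smallp \<delta> q) = Suc (card (smallp \<delta> m))" using sq True sm_fin pnot by simp
      have "(2 powr \<delta>) ^ a \<le> (real p powr \<delta>) ^ a" using p2 \<open>\<delta> > 0\<close>
        by (intro power_mono powr_mono2) auto
      then have "K * (2 powr \<delta>) ^ a \<le> K * (real p powr \<delta>) ^ a" using K1 by (intro mult_left_mono) auto
      then have ap: "real a + 1 \<le> K * (real p powr \<delta>) ^ a" using K[rule_format, of a] by linarith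
      have "real (tau q) \<le> (real a + 1) * real (tau m)" proof -
        have "real (tau q) \<le> real ((a + 1) * tau m)" using st by (simp only: of_nat_le_iff)
        then show ?thesis by (simp add: algebra_simps)
      qed
      also have "\<dots> \<le> (K * (real p powr \<delta>) ^ a) * (K ^ card (smallp \<delta> m) * real m powr \<delta>)"
        using ap IH by (intro mult_mono) auto
      also have "\<dots> = K ^ card (smallp \<delta> q) * real q powr \<delta>" using c pq by (simp add: algebra_simps)
      finally show ?thesis .
    next
      case False
      have c: "card (smallp \<delta> q) = card (smallp \<delta> m)" using sq False by simp
      have "real a + 1 \<le> 2 ^ a" 
        by (induction a) auto
      also have "\<dots> \<le> (real p powr \<delta>) ^ a" using False by (intro power_mono) auto
      finally have ap: "real a + 1 \<le> (real p powr \<delta>) ^ a" .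
      have "real (tau q) \<le> (real a + 1) * real (tau m)" proof -
        have "real (tau q) \<le> real ((a + 1) * tau m)" using st by (simp only: of_nat_le_iff)
        then show ?thesis by (simp add: algebra_simps)
      qed
      also have "\<dots> \<le> ((real p powr \<delta>) ^ a) * (K ^ card (smallp \<delta> m) * real m powr \<delta>)"
        using ap IH by (intro mult_mono) auto
      also have "\<dots> = K ^ card (smallp \<delta> q) * real q powr \<delta>" using c pq by (simp add: algebra_simps)
      finally show ?thesis .
    qed
  qed
qed

lemma tau_bound:
  assumes "\<delta> > 0"
  shows "\<exists>C. \<forall>q>0. real (tau q) \<le> C * real q powr \<delta>"
proof -
  obtain K where K1: "K \<ge> 1" and K: "\<forall>a::nat. real a + 1 \<le> K * (2 powr \<delta>) ^ a"
    using const_K[OF assms] by blast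
  define N where "N = nat \<lceil>2 powr (1 / \<delta>)\<rceil>"
  have "real (tau q) \<le> K ^ N * real q powr \<delta>" if q: "q > 0" for q
  proof -
    have sub: "smallp \<delta> q \<subseteq> {..<N}"
    proof
      fix r assume "r \<in> smallp \<delta> q"
      then have r: "real r powr \<delta> < 2" "prime r" unfolding smallp_def by auto
      have "real r = (real r powr \<delta>) powr (1 / \<delta>)" using assms r(2) prime_gt_0_nat
        by (simp add: powr_powr)
      also have "\<dots> < 2 powr (1 / \<delta>)" using r assms by (intro powr_less_mono2) auto
      finally have "real r < 2 powr (1 / \<delta>)" .
      also have "\<dots> \<le> of_int \<lceil>2 powr (1 / \<delta>)\<rceil>" by (rule le_of_int_ceiling)
      finally have "int r < \<lceil>2 powr (1 / \<delta>)\<rceil>" by linarith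
      then show "r \<in> {..<N}" unfolding N_def by simp
    qed
    have "card (smallp \<delta> q) \<le> N" using card_mono[OF _ sub] by simp
    then have "K ^ card (smallp \<delta> q) \<le> K ^ N" using K1 by (intro power_increasing) auto
    then show ?thesis using tau_bound_aux[OF assms K1 K q]
    proof -
      have "K ^ card (smallp \<delta> q) * real q powr \<delta> \<le> K ^ N * real q powr \<delta>"
        using \<open>K ^ card (smallp \<delta> q) \<le> K ^ N\<close> by (intro mult_right_mono) auto
      then show ?thesis using tau_bound_aux[OF assms K1 K q] by linarith
    qed
  qed
  then show ?thesis by blast
qed



lemma omega0_zero: "\<bar>x\<bar> \<ge> 1 \<Longrightarrow> omega0 x = 0"
  by (simp add: omega0_def)

lemma omega0_le1: "\<bar>omega0 x\<bar> \<le> 1"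
proof (cases "\<bar>x\<bar> < 1")
  case True
  then have "x\<^sup>2 < 1" by (simp add: abs_square_less_1)
  then have "inverse (1 - x\<^sup>2) > 0" by simp
  then show ?thesis using True by (simp add: omega0_def)
qed (simp add: omega0_def)

lemma int_omega0_eq: "integral {..u} omega0 = integral {-1..min u 1} omega0"
proof -
  have "(\<lambda>x. if x \<in> {..u} then omega0 x else 0) = (\<lambda>x. if x \<in> {-1..min u 1} then omega0 x else 0)"
  proof
    fix x :: real
    show "(if x \<in> {..u} then omega0 x else 0) = (if x \<in> {-1..min u 1} then omega0 x else 0)"
      by (cases "\<bar>x\<bar> \<ge> 1") (auto simp: omega0_zero)
  qed
  then show ?thesis by (metis integral_restrict_UNIV)
qed

lemma int_omega0_bound: "\<bar>integral {..u} omega0\<bar> \<le> 2"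
proof -
  define m where "m = min u 1"
  have "\<bar>integral {-1..m} omega0\<bar> \<le> 2"
  proof (cases "omega0 integrable_on {-1..m}")
    case True
    have "norm (integral {-1..m} omega0) \<le> integral {-1..m} (\<lambda>_. 1::real)"
      by (rule integral_norm_bound_integral[OF True]) (auto simp: omega0_le1)
    also have "\<dots> \<le> 2" unfolding m_def by (auto simp: content_real)
    finally show ?thesis by simp
  qed (simp add: not_integrable_integral)
  then show ?thesis by (simp add: int_omega0_eq m_def)
qed

lemma omega_low_zero:
  assumes "\<epsilon> > 0" "t \<le> 0" shows "omega_low \<epsilon> t = 0"
proof -
  have u: "t / \<epsilon> - 1 \<le> -1" using assms by (simp add: divide_nonpos_pos)
  have "(\<lambda>x. if x \<in> {..t / \<epsilon> - 1} then omega0 x else 0) = (\<lambda>x. 0)"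
    using u by (auto simp: omega0_zero)
  then have "integral {..t / \<epsilon> - 1} omega0 = 0" by (metis integral_restrict_UNIV integral_0)
  then show ?thesis by (simp add: omega_low_def)
qed

lemma omega_low_bound: "\<bar>omega_low \<epsilon> t\<bar> \<le> 2 * \<bar>inverse c0\<bar>"
proof -
  have "\<bar>omega_low \<epsilon> t\<bar> = \<bar>inverse c0\<bar> * \<bar>integral {..t / \<epsilon> - 1} omega0\<bar>"
    by (simp add: omega_low_def abs_mult)
  also have "\<dots> \<le> \<bar>inverse c0\<bar> * 2" by (intro mult_left_mono int_omega0_bound) auto
  finally show ?thesis by simp
qed

lemma w_low_bound:
  assumes "i0 \<le> n"
  shows "\<bar>w_low n i0 \<epsilon> x\<bar> \<le> ((2 * \<bar>inverse c0\<bar>)^2) ^ n"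
proof -
  define K where "K = 2 * \<bar>inverse c0\<bar>"
  have "\<bar>w_low n i0 \<epsilon> x\<bar> = (\<Prod>i\<in>{0..n} - {i0}.
        \<bar>omega_low \<epsilon> (1 - \<bar>real_of_int (x i)\<bar> / real_of_int (x i0))
      * omega_low \<epsilon> (\<bar>real_of_int (x i)\<bar> / real_of_int (x i0) - 1 / real_of_int (x i0))\<bar>)"
    unfolding w_low_def by (rule abs_prod)
  also have "\<dots> \<le> (\<Prod>i\<in>{0..n} - {i0}. K^2)"
  proof (intro prod_mono conjI)
    fix i
    have hK: "\<And>t. \<bar>omega_low \<epsilon> t\<bar> \<le> K" unfolding K_def by (rule omega_low_bound)
    show "0 \<le> \<bar>omega_low \<epsilon> (1 - \<bar>real_of_int (x i)\<bar> / real_of_int (x i0)) *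
          omega_low \<epsilon> (\<bar>real_of_int (x i)\<bar> / real_of_int (x i0) - 1 / real_of_int (x i0))\<bar>" by simp
    show "\<bar>omega_low \<epsilon> (1 - \<bar>real_of_int (x i)\<bar> / real_of_int (x i0)) *
          omega_low \<epsilon> (\<bar>real_of_int (x i)\<bar> / real_of_int (x i0) - 1 / real_of_int (x i0))\<bar> \<le> K^2"
      unfolding abs_mult power2_eq_square by (intro mult_mono hK) (auto simp: K_def)
  qed
  also have "\<dots> = (K^2) ^ n" using assms by simp
  finally show ?thesis unfolding K_def .
qed

lemma w_low_support:
  assumes "\<epsilon> > 0" "x i0 \<ge> 1" "i \<le> n" "i \<noteq> i0" "x i = 0 \<or> \<bar>x i\<bar> > x i0"
  shows "w_low n i0 \<epsilon> x = 0"
  unfolding w_low_def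
proof (rule prod_zero)
  show "\<exists>a\<in>{0..n} - {i0}. omega_low \<epsilon> (1 - \<bar>real_of_int (x a)\<bar> / real_of_int (x i0)) *
      omega_low \<epsilon> (\<bar>real_of_int (x a)\<bar> / real_of_int (x i0) - 1 / real_of_int (x i0)) = 0"
  proof (intro bexI[of _ i])
    have X: "real_of_int (x i0) > 0" using assms by simp
    show "omega_low \<epsilon> (1 - \<bar>real_of_int (x i)\<bar> / real_of_int (x i0)) *
      omega_low \<epsilon> (\<bar>real_of_int (x i)\<bar> / real_of_int (x i0) - 1 / real_of_int (x i0)) = 0"
      using assms(5)
    proof
      assume "x i = 0"
      then have "\<bar>real_of_int (x i)\<bar> / real_of_int (x i0) - 1 / real_of_int (x i0) \<le> 0"
        using X by simp
      then show ?thesis using assms(1) omega_low_zero by simp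
    next
      assume "\<bar>x i\<bar> > x i0"
      then have "\<bar>real_of_int (x i)\<bar> > real_of_int (x i0)" by linarith
      then have "\<bar>real_of_int (x i)\<bar> / real_of_int (x i0) > 1" using X by simp
      then have "1 - \<bar>real_of_int (x i)\<bar> / real_of_int (x i0) \<le> 0" by simp
      then show ?thesis using assms(1) omega_low_zero by simp
    qed
  qed (use assms in auto)
qed simp



lemma eq_add: "eq q (a + b) = eq q a * eq q b"
  unfolding eq_def by (simp add: add_divide_distrib distrib_left exp_add)

lemma eq_sum: "finite K \<Longrightarrow> eq q (\<Sum>k\<in>K. f k) = (\<Prod>k\<in>K. eq q (f k))"
  by (induction K rule: finite_induct) (auto simp: eq_add, simp add: eq_def)

lemma norm_eq: "cmod (eq q t) = 1"
  unfolding eq_def by (simp add: norm_exp_eq_Re)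

lemma eq_mult_nat: "eq q (t * int m) = eq q t ^ m"
proof -
  have "2 * pi * \<i> * of_int (t * int m) / of_int q = of_nat m * (2 * pi * \<i> * of_int t / of_int q)"
    by simp
  then show ?thesis unfolding eq_def by (simp only: exp_of_nat_mult)
qed

lemma eq_one_iff:
  assumes "q \<ge> 1" shows "eq q t = 1 \<longleftrightarrow> q dvd t"
proof
  assume "eq q t = 1"
  then obtain m :: int where "Im (2 * pi * \<i> * of_int t / of_int q) = of_int (2 * m) * pi"
    unfolding eq_def exp_eq_1 by blast
  then have "2 * pi * (of_int t / of_int q) = 2 * pi * of_int m" by simp
  then have "(of_int t / of_int q :: real) = of_int m"
    by (metis mult_cancel_left mult_eq_0_iff pi_neq_zero zero_neq_numeral)
  then have "(of_int t :: real) = of_int m * of_int q" using assms by (simp add: divide_eq_eq)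
  then have "t = m * q" by (metis of_int_eq_iff of_int_mult)
  then show "q dvd t" by simp
next
  assume "q dvd t"
  then obtain m where t: "t = q * m" by blast
  have "2 * pi * \<i> * of_int t / of_int q = of_int m * (2 * pi * \<i>)" using assms t by simp
  then show "eq q t = 1" unfolding eq_def by (simp add: exp_eq_1)
qed

lemma char_sum_zero:
  assumes "q \<ge> 1" "\<not> q dvd t"
  shows "(\<Sum>b\<in>{0..<q}. eq q (t * b)) = 0"
proof -
  define N where "N = nat q"
  have img: "{0..<q} = int ` {..<N}" unfolding N_def using assms
    by (simp add: image_int_atLeastLessThan atLeast0LessThan[symmetric])
  have "(\<Sum>b\<in>{0..<q}. eq q (t * b)) = (\<Sum>m<N. eq q (t * int m))"
    unfolding img by (subst sum.reindex) auto
  also have "\<dots> = (\<Sum>m<N. eq q t ^ m)" by (simp add: eq_mult_nat)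
  also have "\<dots> = (eq q t ^ N - 1) / (eq q t - 1)"
    using eq_one_iff[OF assms(1)] assms(2) by (intro geometric_sum) auto
  also have "eq q t ^ N = 1"
    using eq_one_iff[OF assms(1), of "t * int N"] eq_mult_nat[of q t N] unfolding N_def using assms(1) by simp
  finally show ?thesis by simp
qed

lemma char_sum_bound:
  assumes "q \<ge> 1"
  shows "cmod (\<Sum>b\<in>{0..<q}. eq q (t * b)) \<le> of_int q * of_bool (q dvd t)"
proof (cases "q dvd t")
  case True
  have "cmod (\<Sum>b\<in>{0..<q}. eq q (t * b)) \<le> (\<Sum>b\<in>{0..<q}. cmod (eq q (t * b)))" by (rule norm_sum)
  also have "\<dots> = of_int q" using assms by (simp add: norm_eq)
  finally show ?thesis using True by simp
qed (simp add: char_sum_zero assms)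

lemma Sq_bound:
  assumes "q \<ge> 1"
  shows "cmod (Sq n q x a c) \<le> (\<Sum>d\<in>{d\<in>{0..<q}. coprime d q}.
            \<Prod>k\<in>{0..n}. of_int q * of_bool (q dvd d * x k * a k + c k))"
proof -
  define U where "U = {d\<in>{0..<q}. coprime d q}"
  have inner: "(\<Sum>b\<in>PiE {0..n} (\<lambda>_. {0..<q}).
          eq q (d * (\<Sum>k\<le>n. x k * a k * b k) + (\<Sum>k\<le>n. c k * b k)))
        = (\<Prod>k\<in>{0..n}. \<Sum>y\<in>{0..<q}. eq q ((d * x k * a k + c k) * y))" for d
  proof -
    have "eq q (d * (\<Sum>k\<le>n. x k * a k * b k) + (\<Sum>k\<le>n. c k * b k))
          = (\<Prod>k\<in>{0..n}. eq q ((d * x k * a k + c k) * b k))" for b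
    proof -
      have "d * (\<Sum>k\<le>n. x k * a k * b k) + (\<Sum>k\<le>n. c k * b k) = (\<Sum>k\<in>{0..n}. (d * x k * a k + c k) * b k)"
        by (simp add: sum_distrib_left sum.distrib[symmetric] algebra_simps atLeast0AtMost)
      then show ?thesis by (simp add: eq_sum)
    qed
    then have "(\<Sum>b\<in>PiE {0..n} (\<lambda>_. {0..<q}).
          eq q (d * (\<Sum>k\<le>n. x k * a k * b k) + (\<Sum>k\<le>n. c k * b k)))
        = (\<Sum>b\<in>PiE {0..n} (\<lambda>_. {0..<q}). \<Prod>k\<in>{0..n}. eq q ((d * x k * a k + c k) * b k))"
      by simp
    also have "\<dots> = (\<Prod>k\<in>{0..n}. \<Sum>y\<in>{0..<q}. eq q ((d * x k * a k + c k) * y))"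
      by (rule prod_sum_PiE[symmetric]) auto
    finally show ?thesis .
  qed
  have "cmod (Sq n q x a c) = cmod (\<Sum>d\<in>U. \<Prod>k\<in>{0..n}. \<Sum>y\<in>{0..<q}. eq q ((d * x k * a k + c k) * y))"
    unfolding Sq_def U_def inner ..
  also have "\<dots> \<le> (\<Sum>d\<in>U. cmod (\<Prod>k\<in>{0..n}. \<Sum>y\<in>{0..<q}. eq q ((d * x k * a k + c k) * y)))"
    by (rule norm_sum)
  also have "\<dots> \<le> (\<Sum>d\<in>U. \<Prod>k\<in>{0..n}. of_int q * of_bool (q dvd d * x k * a k + c k))"
  proof (rule sum_mono)
    fix d
    show "cmod (\<Prod>k\<in>{0..n}. \<Sum>y\<in>{0..<q}. eq q ((d * x k * a k + c k) * y))
        \<le> (\<Prod>k\<in>{0..n}. of_int q * of_bool (q dvd d * x k * a k + c k))"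
      unfolding prod_norm[symmetric]
      by (intro prod_mono conjI norm_ge_zero char_sum_bound assms)
  qed
  finally show ?thesis unfolding U_def .
qed

lemma count_sol:
  assumes q: "q \<ge> 1" and cop: "coprime d q"
  shows "int (card {a\<in>{0..<q}. q dvd d * v * a + c}) \<le> gcd v q"
proof (cases "{a\<in>{0..<q}. q dvd d * v * a + c} = {}")
  case True then show ?thesis by (metis card.empty gcd_ge_0_int of_nat_0)
next
  case False
  then obtain a0 where a0: "a0 \<in> {0..<q}" "q dvd d * v * a0 + c" by auto
  define g where "g = gcd v q"
  define m where "m = q div g"
  have g0: "g > 0" unfolding g_def using q by simp
  have qmg: "q = m * g" unfolding m_def g_def by simp
  have m0: "m > 0"
  proof (rule ccontr)
    assume "\<not> m > 0"
    then have "m * g \<le> 0" using g0 by (simp add: mult_nonpos_nonneg)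
    then show False using q qmg by simp
  qed
  have cong: "m dvd a - a0" if "a \<in> {a\<in>{0..<q}. q dvd d * v * a + c}" for a
  proof -
    have "q dvd (d * v * a + c) - (d * v * a0 + c)" using that a0 by (intro dvd_diff) auto
    then have "q dvd d * (v * (a - a0))" by (simp add: algebra_simps)
    then have "q dvd v * (a - a0)" using cop by (simp add: coprime_dvd_mult_right_iff coprime_commute)
    then have "m * g dvd (v div g) * g * (a - a0)" using qmg unfolding g_def by simp
    then have "m dvd (v div g) * (a - a0)" using g0 by (simp add: mult.commute mult.left_commute)
    moreover have "coprime m (v div g)" unfolding m_def g_def using q
      by (metis coprime_commute div_gcd_coprime gcd.commute not_one_le_zero)
    ultimately show ?thesis by (simp add: coprime_dvd_mult_right_iff)
  qed
  have inj: "inj_on (\<lambda>a. a div m) {a\<in>{0..<q}. q dvd d * v * a + c}"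
  proof (rule inj_onI)
    fix a b assume a: "a \<in> {a\<in>{0..<q}. q dvd d * v * a + c}" and b: "b \<in> {a\<in>{0..<q}. q dvd d * v * a + c}"
      and e: "a div m = b div m"
    have "m dvd a - b" using cong[OF a] cong[OF b] by (metis dvd_diff diff_diff_eq2 diff_diff_eq diff_add_cancel add_diff_cancel_left')
    then have "a mod m = b mod m" by (simp add: mod_eq_dvd_iff)
    then show "a = b" using e by (metis div_mult_mod_eq)
  qed
  have sub: "(\<lambda>a. a div m) ` {a\<in>{0..<q}. q dvd d * v * a + c} \<subseteq> {0..<g}"
  proof
    fix z assume "z \<in> (\<lambda>a. a div m) ` {a\<in>{0..<q}. q dvd d * v * a + c}"
    then obtain a where a: "0 \<le> a" "a < m * g" and z: "z = a div m" using qmg by auto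
    have "z \<ge> 0" using a m0 z by (simp add: pos_imp_zdiv_nonneg_iff)
    moreover have "z < g"
    proof -
      have e: "a div m * m + a mod m = a" by (rule div_mult_mod_eq)
      have "a mod m \<ge> 0" using m0 by simp
      moreover have "a < g * m" using a(2) by (simp add: mult.commute)
      ultimately have "a div m * m < g * m" using e by linarith
      then show ?thesis using m0 z by (simp add: mult_less_cancel_right_pos)
    qed
    ultimately show "z \<in> {0..<g}" by simp
  qed
  have "card {a\<in>{0..<q}. q dvd d * v * a + c} = card ((\<lambda>a. a div m) ` {a\<in>{0..<q}. q dvd d * v * a + c})"
    using inj by (simp add: card_image)
  also have "\<dots> \<le> card {0..<g}" by (rule card_mono[OF _ sub]) simp
  also have "\<dots> = nat g" by simp
  finally have cl: "card {a\<in>{0..<q}. q dvd d * v * a + c} \<le> nat g" .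
  then have "int (card {a\<in>{0..<q}. q dvd d * v * a + c}) \<le> int (nat g)" by (simp only: of_nat_le_iff)
  then show ?thesis unfolding g_def using g0 g_def by simp
qed

lemma Fsum_bound:
  assumes q: "q \<ge> 1"
  shows "(\<Sum>a'\<in>PiE {0..n} (\<lambda>j. if j = j0 then {Y mod q} else {0..<q}). cmod (Sq n q x a' c))
     \<le> real_of_int q ^ (n + 2) * (\<Prod>k\<in>{0..n}. if k = j0 then 1 else real_of_int (gcd (x k) q))"
proof -
  define A where "A = (\<lambda>j. if j = j0 then {Y mod q} else {0..<q})"
  define U where "U = {d\<in>{0..<q}. coprime d q}"
  define h where "h = (\<lambda>k. if k = j0 then 1 else real_of_int (gcd (x k) q))"
  have finA: "\<And>j. finite (A j)" unfolding A_def by auto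
  have "(\<Sum>a'\<in>PiE {0..n} A. cmod (Sq n q x a' c))
      \<le> (\<Sum>a'\<in>PiE {0..n} A. \<Sum>d\<in>U. \<Prod>k\<in>{0..n}. of_int q * of_bool (q dvd d * x k * a' k + c k))"
    unfolding U_def by (intro sum_mono Sq_bound q)
  also have "\<dots> = (\<Sum>d\<in>U. \<Sum>a'\<in>PiE {0..n} A. \<Prod>k\<in>{0..n}. of_int q * of_bool (q dvd d * x k * a' k + c k))"
    by (rule sum.swap)
  also have "\<dots> = (\<Sum>d\<in>U. \<Prod>k\<in>{0..n}. \<Sum>a\<in>A k. of_int q * of_bool (q dvd d * x k * a + c k))"
    by (intro sum.cong refl prod_sum_PiE[symmetric]) (auto simp: finA)
  also have "\<dots> \<le> (\<Sum>d\<in>U. \<Prod>k\<in>{0..n}. of_int q * h k)"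
  proof (intro sum_mono prod_mono conjI)
    fix d k assume d: "d \<in> U"
    show "0 \<le> (\<Sum>a\<in>A k. of_int q * of_bool (q dvd d * x k * a + c k) :: real)"
      using q by (intro sum_nonneg) auto
    have e: "(\<Sum>a\<in>A k. of_int q * of_bool (q dvd d * x k * a + c k) :: real)
        = of_int q * real (card (A k \<inter> {a. q dvd d * x k * a + c k}))"
      by (simp add: sum_distrib_left[symmetric] finA)
    have "real (card (A k \<inter> {a. q dvd d * x k * a + c k})) \<le> h k"
    proof (cases "k = j0")
      case True
      have "card (A k \<inter> {a. q dvd d * x k * a + c k}) \<le> card {Y mod q}"
        using True unfolding A_def by (intro card_mono) auto
      then show ?thesis using True unfolding h_def by simp
    next
      case False
      have "A k \<inter> {a. q dvd d * x k * a + c k} = {a\<in>{0..<q}. q dvd d * x k * a + c k}"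
        using False unfolding A_def by auto
      moreover have "int (card {a\<in>{0..<q}. q dvd d * x k * a + c k}) \<le> gcd (x k) q"
        using d unfolding U_def by (intro count_sol q) auto
      ultimately have c2: "int (card (A k \<inter> {a. q dvd d * x k * a + c k})) \<le> gcd (x k) q" by simp
      then have "real_of_int (int (card (A k \<inter> {a. q dvd d * x k * a + c k}))) \<le> real_of_int (gcd (x k) q)"
        by (simp only: of_int_le_iff)
      then show ?thesis using False unfolding h_def by simp
    qed
    then show "(\<Sum>a\<in>A k. of_int q * of_bool (q dvd d * x k * a + c k) :: real) \<le> of_int q * h k"
      unfolding e using q by (intro mult_left_mono) auto
  qed
  also have "\<dots> = real (card U) * (real_of_int q ^ (n + 1) * prod h {0..n})"
    by (simp add: prod.distrib)
  also have "\<dots> \<le> real_of_int q * (real_of_int q ^ (n + 1) * prod h {0..n})"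
  proof (intro mult_right_mono)
    have "card U \<le> card {0..<q}" unfolding U_def by (intro card_mono) auto
    then show "real (card U) \<le> real_of_int q" using q by simp
    show "0 \<le> real_of_int q ^ (n + 1) * prod h {0..n}"
      using q unfolding h_def by (intro mult_nonneg_nonneg prod_nonneg) auto
  qed
  also have "\<dots> = real_of_int q ^ (n + 2) * prod h {0..n}" by simp
  finally show ?thesis unfolding A_def h_def .
qed

lemma mult_count:
  fixes d X :: int
  assumes d: "d \<ge> 1" and X: "X \<ge> 0"
  shows "real_of_int d * real (card {v\<in>{-X..X}. v \<noteq> 0 \<and> d dvd v}) \<le> 2 * real_of_int X"
proof -
  define M where "M = X div d"
  have sub: "{v\<in>{-X..X}. v \<noteq> 0 \<and> d dvd v} \<subseteq> (\<lambda>k. d * k) ` ({-M..-1} \<union> {1..M})"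
  proof
    fix v assume v: "v \<in> {v\<in>{-X..X}. v \<noteq> 0 \<and> d dvd v}"
    then obtain k where k: "v = d * k" by auto
    have k0: "k \<noteq> 0" using v k by auto
    have "\<bar>k\<bar> * d \<le> X" using v k d by (auto simp: abs_mult mult.commute)
    then have "(\<bar>k\<bar> * d) div d \<le> X div d" using d by (intro zdiv_mono1) auto
    then have "\<bar>k\<bar> \<le> M" unfolding M_def using d by simp
    then have "k \<in> {-M..-1} \<union> {1..M}" using k0 by auto
    then show "v \<in> (\<lambda>k. d * k) ` ({-M..-1} \<union> {1..M})" using k by blast
  qed
  have "card {v\<in>{-X..X}. v \<noteq> 0 \<and> d dvd v} \<le> card ((\<lambda>k. d * k) ` ({-M..-1} \<union> {1..M}))"
    by (intro card_mono sub) auto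
  also have "\<dots> \<le> card ({-M..-1} \<union> {1..M})" by (rule card_image_le) auto
  also have "\<dots> \<le> card {-M..-1} + card {1..M}" by (rule card_Un_le)
  also have "\<dots> = 2 * nat M" by simp
  finally have c: "real (card {v\<in>{-X..X}. v \<noteq> 0 \<and> d dvd v}) \<le> 2 * real (nat M)"
    by (metis of_nat_le_iff of_nat_mult of_nat_numeral)
  have M0: "M \<ge> 0" unfolding M_def using d X by (simp add: pos_imp_zdiv_nonneg_iff)
  have "d * M \<le> X"
  proof -
    have e: "X div d * d + X mod d = X" by (rule div_mult_mod_eq)
    have "X mod d \<ge> 0" using d by simp
    then have "X div d * d \<le> X" using e by linarith
    then show ?thesis unfolding M_def by (simp add: mult.commute)
  qed
  then have dM: "real_of_int d * real_of_int M \<le> real_of_int X" by (metis of_int_le_iff of_int_mult)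
  have "real_of_int d * real (card {v\<in>{-X..X}. v \<noteq> 0 \<and> d dvd v}) \<le> real_of_int d * (2 * real (nat M))"
    using c d by (intro mult_left_mono) auto
  also have "\<dots> = 2 * (real_of_int d * real_of_int M)" using M0 by simp
  also have "\<dots> \<le> 2 * real_of_int X" using dM by simp
  finally show ?thesis .
qed

lemma gcd_sum_bound:
  fixes q X :: int
  assumes q: "q \<ge> 1" and X: "X \<ge> 0"
  shows "(\<Sum>v\<in>{-X..X}. if v = 0 then 0 else real_of_int (gcd v q)) \<le> 2 * real_of_int X * real (tau (nat q))"
proof -
  define D where "D = {d\<in>{1..q}. d dvd q}"
  have finD: "finite D" unfolding D_def by (rule finite_subset[of _ "{1..q}"]) auto
  have cardD: "card D = tau (nat q)"
  proof -
    have "D = int ` {d. d dvd nat q}"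
    proof
      show "D \<subseteq> int ` {d. d dvd nat q}"
      proof
        fix d assume "d \<in> D"
        then have d: "d \<ge> 1" "d dvd q" unfolding D_def by auto
        then have "nat d dvd nat q" using q by (simp add: nat_dvd_iff)
        then show "d \<in> int ` {d. d dvd nat q}" using d by (intro image_eqI[of _ _ "nat d"]) auto
      qed
      show "int ` {d. d dvd nat q} \<subseteq> D"
      proof
        fix e assume "e \<in> int ` {d. d dvd nat q}"
        then obtain d where d: "d dvd nat q" and e: "e = int d" by auto
        have qn: "int (nat q) = q" using q by simp
        have "int d dvd int (nat q)" using d by (simp only: int_dvd_int_iff)
        then have "int d dvd q" using qn by simp
        moreover have "nat q \<noteq> 0" using q by simp
        then have "d \<noteq> 0" using d by (metis dvd_0_left_iff)
        then have "d \<ge> 1" by simp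
        moreover have "d \<le> nat q" using d \<open>nat q \<noteq> 0\<close> by (simp add: dvd_imp_le)
        then have "int d \<le> q" using qn by linarith
        ultimately show "e \<in> D" unfolding D_def e by auto
      qed
    qed
    then show ?thesis unfolding tau_def by (simp add: card_image)
  qed
  have pt: "(if v = 0 then 0 else real_of_int (gcd v q)) \<le> (\<Sum>d\<in>D. if v \<noteq> 0 \<and> d dvd v then real_of_int d else 0)" for v
  proof (cases "v = 0")
    case False
    have "gcd v q \<noteq> 0" using q by simp
    then have g1: "gcd v q \<ge> 1" using gcd_ge_0_int[of v q] by linarith
    have "gcd v q \<le> q" using q by (intro zdvd_imp_le) auto
    then have gD: "gcd v q \<in> D" unfolding D_def using g1 by auto
    have "real_of_int (gcd v q) = (if v \<noteq> 0 \<and> gcd v q dvd v then real_of_int (gcd v q) else 0)" using False by simp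
    also have "\<dots> \<le> (\<Sum>d\<in>D. if v \<noteq> 0 \<and> d dvd v then real_of_int d else 0)"
      by (rule member_le_sum[OF gD _ finD]) (auto simp: D_def)
    finally show ?thesis using False by simp
  qed (simp add: sum_nonneg D_def)
  have "(\<Sum>v\<in>{-X..X}. if v = 0 then 0 else real_of_int (gcd v q))
      \<le> (\<Sum>v\<in>{-X..X}. \<Sum>d\<in>D. if v \<noteq> 0 \<and> d dvd v then real_of_int d else 0)"
    by (intro sum_mono pt)
  also have "\<dots> = (\<Sum>d\<in>D. \<Sum>v\<in>{-X..X}. if v \<noteq> 0 \<and> d dvd v then real_of_int d else 0)"
    by (rule sum.swap)
  also have "\<dots> = (\<Sum>d\<in>D. real_of_int d * real (card {v\<in>{-X..X}. v \<noteq> 0 \<and> d dvd v}))"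
  proof (intro sum.cong refl)
    fix d
    have "(\<Sum>v\<in>{-X..X}. if v \<noteq> 0 \<and> d dvd v then real_of_int d else 0)
        = (\<Sum>v\<in>{-X..X}. real_of_int d * of_bool (v \<noteq> 0 \<and> d dvd v))"
      by (intro sum.cong) auto
    also have "\<dots> = real_of_int d * real (card {v\<in>{-X..X}. v \<noteq> 0 \<and> d dvd v})"
      by (simp add: sum_distrib_left[symmetric] Int_def)
    finally show "(\<Sum>v\<in>{-X..X}. if v \<noteq> 0 \<and> d dvd v then real_of_int d else 0)
        = real_of_int d * real (card {v\<in>{-X..X}. v \<noteq> 0 \<and> d dvd v})" .
  qed
  also have "\<dots> \<le> (\<Sum>d\<in>D. 2 * real_of_int X)"
    by (intro sum_mono mult_count X) (auto simp: D_def)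
  also have "\<dots> = 2 * real_of_int X * real (tau (nat q))" using cardD by simp
  finally show ?thesis .
qed

theorem mainTheorem5:
  fixes n :: nat and \<epsilon> \<eta> :: real
  assumes "n \<ge> 2" and "0 < \<epsilon>" and "\<epsilon> < 1" and "\<eta> > 0"
  shows "\<exists>C. \<forall>i0 j0 (X :: int) (Y :: int) (c :: nat \<Rightarrow> int) (q :: int).
     i0 \<le> n \<longrightarrow> j0 \<le> n \<longrightarrow> X \<ge> 1 \<longrightarrow> q \<ge> 1 \<longrightarrow>
     (let F = (\<lambda>x. \<Sum>a'\<in>PiE {0..n} (\<lambda>j. if j = j0 then {Y mod q} else {0..<q}).
                    w_low n i0 \<epsilon> x * cmod (Sq n q x a' c));
          A = PiE {0..n} (\<lambda>i. if i = i0 then {X} else UNIV)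
      in F summable_on A \<and>
         infsum F A \<le> C * real_of_int q powr (real n + 3 + \<eta>) * real_of_int X ^ n)"
proof -
  define \<delta> where "\<delta> = \<eta> / real n"
  have \<delta>0: "\<delta> > 0" using assms by (simp add: \<delta>_def)
  have n\<delta>: "real n * \<delta> = \<eta>" using assms by (simp add: \<delta>_def)
  obtain Ct where Ct: "\<forall>q>0. real (tau q) \<le> Ct * real q powr \<delta>" using tau_bound[OF \<delta>0] by blast
  have "tau 1 = 1" unfolding tau_def by simp
  then have Ct0: "Ct \<ge> 0" using Ct[rule_format, of 1] by simp
  define B where "B = ((2 * \<bar>inverse c0\<bar>)^2) ^ n"
  have B0: "B \<ge> 0" by (simp add: B_def)
  show ?thesis
  proof (intro exI[of _ "B * (2 * Ct) ^ n"] allI impI)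
    fix i0 j0 :: nat and X Y :: int and c :: "nat \<Rightarrow> int" and q :: int
    assume i0: "i0 \<le> n" and j0: "j0 \<le> n" and X: "X \<ge> 1" and q: "q \<ge> 1"
    define F where "F = (\<lambda>x. \<Sum>a'\<in>PiE {0..n} (\<lambda>j. if j = j0 then {Y mod q} else {0..<q}).
                    w_low n i0 \<epsilon> x * cmod (Sq n q x a' c))"
    define S where "S = (\<lambda>x. \<Sum>a'\<in>PiE {0..n} (\<lambda>j. if j = j0 then {Y mod q} else {0..<q}).
                    cmod (Sq n q x a' c))"
    have FS: "F x = w_low n i0 \<epsilon> x * S x" for x
      unfolding F_def S_def by (simp add: sum_distrib_left)
    have S0: "S x \<ge> 0" for x unfolding S_def by (intro sum_nonneg) auto
    define A where "A = PiE {0..n} (\<lambda>i. if i = i0 then {X} else (UNIV :: int set))"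
    define A' where "A' = PiE {0..n} (\<lambda>i. if i = i0 then {X} else {-X..X})"
    have finA': "finite A'" unfolding A'_def by (intro finite_PiE) auto
    have vanish: "F x = 0" if x: "x \<in> A - A'" for x
    proof -
      have xA: "x \<in> A" and xA': "x \<notin> A'" using x by auto
      have "x i0 \<in> (if i0 = i0 then {X} else (UNIV :: int set))" by (rule PiE_mem[OF xA[unfolded A_def]]) (use i0 in auto)
      then have xi0: "x i0 = X" by simp
      have ext: "x \<in> extensional {0..n}" using xA unfolding A_def by (auto simp: PiE_iff)
      then obtain i where i: "i \<in> {0..n}" "x i \<notin> (if i = i0 then {X} else {-X..X})"
        using xA' ext unfolding A'_def PiE_iff by blast
      have ii0: "i \<noteq> i0" using i xi0 by auto
      then have "\<bar>x i\<bar> > x i0" using i xi0 by auto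
      then have "w_low n i0 \<epsilon> x = 0" using assms(2) xi0 X i ii0 by (intro w_low_support) auto
      then show ?thesis by (simp add: FS)
    qed
    have subA: "A' \<subseteq> A" unfolding A_def A'_def by (rule PiE_mono) auto
    have sum_eq: "F summable_on A \<longleftrightarrow> F summable_on A'"
      by (rule summable_on_cong_neutral) (use vanish subA in auto)
    have inf_eq: "infsum F A = infsum F A'"
      by (rule infsum_cong_neutral) (use vanish subA in auto)
    have summ: "F summable_on A" using sum_eq finA' by simp
    define H where "H = (\<lambda>k v. if k = i0 then (if k = j0 then 1 else real_of_int (gcd v q))
                                  else (if v = 0 then 0 else real_of_int (gcd v q)))"
    have H0: "H k v \<ge> 0" for k v unfolding H_def by auto
    have pt: "F x \<le> B * real_of_int q ^ (n + 2) * (\<Prod>k\<in>{0..n}. H k (x k))" if x: "x \<in> A'" for x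
    proof -
      have "x i0 \<in> (if i0 = i0 then {X} else {-X..X})" by (rule PiE_mem[OF x[unfolded A'_def]]) (use i0 in auto)
      then have xi0: "x i0 = X" by simp
      have R0: "0 \<le> B * real_of_int q ^ (n + 2) * (\<Prod>k\<in>{0..n}. H k (x k))"
        using B0 q H0 by (intro mult_nonneg_nonneg prod_nonneg) auto
      show ?thesis
      proof (cases "\<exists>i\<in>{0..n}. i \<noteq> i0 \<and> x i = 0")
        case True
        then obtain i where "i \<in> {0..n}" "i \<noteq> i0" "x i = 0" by blast
        then have "w_low n i0 \<epsilon> x = 0" using assms(2) xi0 X by (intro w_low_support) auto
        then show ?thesis using R0 by (simp add: FS)
      next
        case False
        have "F x \<le> \<bar>w_low n i0 \<epsilon> x\<bar> * S x" unfolding FS using S0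
          by (intro mult_right_mono) auto
        also have "\<dots> \<le> B * (real_of_int q ^ (n + 2) * (\<Prod>k\<in>{0..n}. if k = j0 then 1 else real_of_int (gcd (x k) q)))"
          using S0 B0 unfolding S_def B_def
          by (intro mult_mono w_low_bound i0 Fsum_bound q) auto
        also have "\<dots> \<le> B * (real_of_int q ^ (n + 2) * (\<Prod>k\<in>{0..n}. H k (x k)))"
        proof (intro mult_left_mono prod_mono conjI)
          fix k assume k: "k \<in> {0..n}"
          show "0 \<le> (if k = j0 then 1 else real_of_int (gcd (x k) q))" by auto
          have g1: "gcd (x k) q \<ge> 1"
          proof -
            have "gcd (x k) q \<noteq> 0" using q by simp
            then show ?thesis using gcd_ge_0_int[of "x k" q] by linarith
          qed
          show "(if k = j0 then 1 else real_of_int (gcd (x k) q)) \<le> H k (x k)"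
            using False k g1 unfolding H_def by auto
        qed (use B0 q in auto)
        finally show ?thesis by (simp add: mult.assoc)
      qed
    qed
    have "infsum F A = sum F A'" using inf_eq finA' by simp
    also have "\<dots> \<le> (\<Sum>x\<in>A'. B * real_of_int q ^ (n + 2) * (\<Prod>k\<in>{0..n}. H k (x k)))"
      by (intro sum_mono pt)
    also have "\<dots> = B * real_of_int q ^ (n + 2) * (\<Sum>x\<in>A'. \<Prod>k\<in>{0..n}. H k (x k))"
      by (simp add: sum_distrib_left)
    also have "(\<Sum>x\<in>A'. \<Prod>k\<in>{0..n}. H k (x k)) = (\<Prod>k\<in>{0..n}. \<Sum>v\<in>(if k = i0 then {X} else {-X..X}). H k v)"
      unfolding A'_def by (rule prod_sum_PiE[symmetric]) auto
    also have "\<dots> = (\<Sum>v\<in>{X}. H i0 v) * (\<Prod>k\<in>{0..n} - {i0}. \<Sum>v\<in>{-X..X}. H k v)"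
      using i0 by (subst prod.remove[of _ i0]) auto
    also have "\<dots> \<le> real_of_int q * (2 * real_of_int X * (Ct * real_of_int q powr \<delta>)) ^ n"
    proof (intro mult_mono)
      have "gcd X q \<le> q" using q by (intro zdvd_imp_le) auto
      then show "(\<Sum>v\<in>{X}. H i0 v) \<le> real_of_int q" unfolding H_def using q by auto
      have "(\<Prod>k\<in>{0..n} - {i0}. \<Sum>v\<in>{-X..X}. H k v) \<le> (\<Prod>k\<in>{0..n} - {i0}. 2 * real_of_int X * (Ct * real_of_int q powr \<delta>))"
      proof (intro prod_mono conjI)
        fix k assume k: "k \<in> {0..n} - {i0}"
        show "0 \<le> (\<Sum>v\<in>{-X..X}. H k v)" using H0 by (intro sum_nonneg) auto
        have "(\<Sum>v\<in>{-X..X}. H k v) = (\<Sum>v\<in>{-X..X}. if v = 0 then 0 else real_of_int (gcd v q))"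
          using k unfolding H_def by auto
        also have "\<dots> \<le> 2 * real_of_int X * real (tau (nat q))" using q X by (intro gcd_sum_bound) auto
        also have "\<dots> \<le> 2 * real_of_int X * (Ct * real_of_int q powr \<delta>)"
        proof -
          have "nat q > 0" using q by simp
          then have "real (tau (nat q)) \<le> Ct * real (nat q) powr \<delta>" using Ct by blast
          also have "real (nat q) = real_of_int q" using q by simp
          finally show ?thesis using X by (intro mult_left_mono) auto
        qed
        finally show "(\<Sum>v\<in>{-X..X}. H k v) \<le> 2 * real_of_int X * (Ct * real_of_int q powr \<delta>)" .
      qed
      also have "\<dots> = (2 * real_of_int X * (Ct * real_of_int q powr \<delta>)) ^ n" using i0 by simp
      finally show "(\<Prod>k\<in>{0..n} - {i0}. \<Sum>v\<in>{-X..X}. H k v) \<le> (2 * real_of_int X * (Ct * real_of_int q powr \<delta>)) ^ n" .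
      show "0 \<le> (\<Prod>k\<in>{0..n} - {i0}. \<Sum>v\<in>{-X..X}. H k v)" using H0 by (intro prod_nonneg sum_nonneg) auto
    qed (use q in auto)
    finally have le1: "infsum F A \<le> B * real_of_int q ^ (n + 2) * (real_of_int q * (2 * real_of_int X * (Ct * real_of_int q powr \<delta>)) ^ n)"
      using B0 q by (simp add: mult_left_mono)
    have qp: "real_of_int q ^ (n + 3) * (real_of_int q powr \<delta>) ^ n = real_of_int q powr (real n + 3 + \<eta>)"
    proof -
      have q0: "real_of_int q > 0" using q by simp
      have "(real_of_int q powr \<delta>) ^ n = real_of_int q powr (real n * \<delta>)" using q0 by (simp add: powr_power)
      also have "\<dots> = real_of_int q powr \<eta>" using n\<delta> by simp
      finally have a: "(real_of_int q powr \<delta>) ^ n = real_of_int q powr \<eta>" .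
      have b: "real_of_int q ^ (n + 3) = real_of_int q powr (real (n + 3))" by (rule powr_realpow[OF q0, symmetric])
      show ?thesis unfolding a b using q0 by (simp add: powr_add[symmetric] add.commute add.left_commute)
    qed
    have "B * real_of_int q ^ (n + 2) * (real_of_int q * (2 * real_of_int X * (Ct * real_of_int q powr \<delta>)) ^ n)
        = B * (2 * Ct) ^ n * (real_of_int q ^ (n + 3) * (real_of_int q powr \<delta>) ^ n) * real_of_int X ^ n"
      by (simp add: power_mult_distrib algebra_simps power_add power2_eq_square power3_eq_cube)
    also have "\<dots> = B * (2 * Ct) ^ n * real_of_int q powr (real n + 3 + \<eta>) * real_of_int X ^ n"
      unfolding qp ..
    finally have eqF: "B * real_of_int q ^ (n + 2) * (real_of_int q * (2 * real_of_int X * (Ct * real_of_int q powr \<delta>)) ^ n)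
        = B * (2 * Ct) ^ n * real_of_int q powr (real n + 3 + \<eta>) * real_of_int X ^ n" .
    have "infsum F A \<le> B * (2 * Ct) ^ n * real_of_int q powr (real n + 3 + \<eta>) * real_of_int X ^ n"
      using le1 unfolding eqF .
    then have main: "F summable_on A \<and> infsum F A \<le> B * (2 * Ct) ^ n * real_of_int q powr (real n + 3 + \<eta>) * real_of_int X ^ n"
      using summ by blast
    then show "let F = (\<lambda>x. \<Sum>a'\<in>PiE {0..n} (\<lambda>j. if j = j0 then {Y mod q} else {0..<q}).
                    w_low n i0 \<epsilon> x * cmod (Sq n q x a' c));
          A = PiE {0..n} (\<lambda>i. if i = i0 then {X} else UNIV)
      in F summable_on A \<and>
         infsum F A \<le> B * (2 * Ct) ^ n * real_of_int q powr (real n + 3 + \<eta>) * real_of_int X ^ n"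
      unfolding Let_def F_def A_def .
  qed
qed

end
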